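(* Let $(P_n)$ be a sequence of finite posets. Then the following are equivalent: (i) $t(Q,P_n)$ converges for every poset $Q\in\mathcal P$, and $|P_n|$ converges to some limit in $\mathbb N\cup\{\infty\}$; (ii) $t_{\mathrm{inj}}(Q,P_n)$ converges for every $Q\in\mathcal P$; (iii) $t_{\mathrm{ind}}(Q,P_n)$ converges for every $Q\in\mathcal P$; (iv) $t(F,P_n)$ converges for every digraph $F\in\mathcal D$, and $|P_n|$ converges to some limit in $\mathbb N\cup\{\infty\}$; (v) $t_{\mathrm{inj}}(F,P_n)$ converges for every $F\in\mathcal D$; (vi) $t_{\mathrm{ind}}(F,P_n)$ converges for every $F\in\mathcal D$.
   Context: A digraph has a vertex set $V$ and edge set $E\subseteq V\times V$ (loops allowed); $\mathcal D$ is the set of isomorphism classes of finite nonempty digraphs. A poset (nonempty set with strict partial order $<$) is regarded as the digraph with an edge $i\to j$ iff $i<j$; $\mathcal P\subset\mathcal D$ is the set of isomorphism classes of finite nonempty posets. For finite digraphs $F,G$: $t(F,G)$ is the proportion of all maps $\varphi:V(F)\to V(G)$ that are homomorphisms ($i\to j$ in $F$ implies $\varphi(i)\to\varphi(j)$ in $G$); $t_{\mathrm{inj}}(F,G)$ is the proportion of injective maps that are homomorphisms; $t_{\mathrm{ind}}(F,G)$ is the proportion of injective maps $\varphi$ with ($i\to j$ in $F$ iff $\varphi(i)\to\varphi(j)$ in $G$) for all $i,j$; if $|F|>|G|$, $t_{\mathrm{inj}}(F,G)=t_{\mathrm{ind}}(F,G)=0$. For posets these coincide with the poset versions. *)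

theory Defs
  imports "HOL-Analysis.Analysis" "HOL-Library.FuncSet"
begin

definition is_digraph :: "'a set \<Rightarrow> ('a \<times> 'a) set \<Rightarrow> bool" where
  "is_digraph V E \<longleftrightarrow> finite V \<and> V \<noteq> {} \<and> E \<subseteq> V \<times> V"

text \<open>A finite (nonempty) poset, viewed as the digraph with edge i \<rightarrow> j iff i < j
  (strict partial order: irreflexive and transitive).\<close>

definition is_poset :: "'a set \<Rightarrow> ('a \<times> 'a) set \<Rightarrow> bool" where
  "is_poset V E \<longleftrightarrow> is_digraph V E \<and> (\<forall>x\<in>V. (x, x) \<notin> E) \<and> trans E"

definition is_hom :: "('a \<times> 'a) set \<Rightarrow> ('b \<times> 'b) set \<Rightarrow> ('a \<Rightarrow> 'b) \<Rightarrow> bool" where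
  "is_hom EF EG \<phi> \<longleftrightarrow> (\<forall>i j. (i, j) \<in> EF \<longrightarrow> (\<phi> i, \<phi> j) \<in> EG)"

definition is_ind :: "'a set \<Rightarrow> ('a \<times> 'a) set \<Rightarrow> ('b \<times> 'b) set \<Rightarrow> ('a \<Rightarrow> 'b) \<Rightarrow> bool" where
  "is_ind VF EF EG \<phi> \<longleftrightarrow> (\<forall>i\<in>VF. \<forall>j\<in>VF. (i, j) \<in> EF \<longleftrightarrow> (\<phi> i, \<phi> j) \<in> EG)"

definition hom_dens :: "'a set \<Rightarrow> ('a \<times> 'a) set \<Rightarrow> 'b set \<Rightarrow> ('b \<times> 'b) set \<Rightarrow> real" where
  "hom_dens VF EF VG EG =
     real (card {\<phi> \<in> VF \<rightarrow>\<^sub>E VG. is_hom EF EG \<phi>}) / real (card (VF \<rightarrow>\<^sub>E VG))"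

definition inj_dens :: "'a set \<Rightarrow> ('a \<times> 'a) set \<Rightarrow> 'b set \<Rightarrow> ('b \<times> 'b) set \<Rightarrow> real" where
  "inj_dens VF EF VG EG =
     (if card VF > card VG then 0 else
      real (card {\<phi> \<in> VF \<rightarrow>\<^sub>E VG. inj_on \<phi> VF \<and> is_hom EF EG \<phi>})
        / real (card {\<phi> \<in> VF \<rightarrow>\<^sub>E VG. inj_on \<phi> VF}))"

definition ind_dens :: "'a set \<Rightarrow> ('a \<times> 'a) set \<Rightarrow> 'b set \<Rightarrow> ('b \<times> 'b) set \<Rightarrow> real" where
  "ind_dens VF EF VG EG =
     (if card VF > card VG then 0 else
      real (card {\<phi> \<in> VF \<rightarrow>\<^sub>E VG. inj_on \<phi> VF \<and> is_ind VF EF EG \<phi>})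
        / real (card {\<phi> \<in> VF \<rightarrow>\<^sub>E VG. inj_on \<phi> VF}))"

text \<open>Convergence of a sequence of naturals in \<nat> \<union> {\<infinity>}: eventually constant, or tends to \<infinity>.\<close>

definition card_converges :: "(nat \<Rightarrow> nat) \<Rightarrow> bool" where
  "card_converges s \<longleftrightarrow>
     (\<exists>L::nat. eventually (\<lambda>n. s n = L) sequentially) \<or> filterlim s at_top sequentially"

end

theory Submission
  imports Defs
begin


definition homS :: "nat set \<Rightarrow> (nat \<times> nat) set \<Rightarrow> 'b set \<Rightarrow> ('b \<times> 'b) set \<Rightarrow> (nat \<Rightarrow> 'b) set" where
  "homS VF EF VG EG = {\<phi> \<in> VF \<rightarrow>\<^sub>E VG. is_hom EF EG \<phi>}"
definition injS :: "nat set \<Rightarrow> (nat \<times> nat) set \<Rightarrow> 'b set \<Rightarrow> ('b \<times> 'b) set \<Rightarrow> (nat \<Rightarrow> 'b) set" where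
  "injS VF EF VG EG = {\<phi> \<in> VF \<rightarrow>\<^sub>E VG. inj_on \<phi> VF \<and> is_hom EF EG \<phi>}"
definition indS :: "nat set \<Rightarrow> (nat \<times> nat) set \<Rightarrow> 'b set \<Rightarrow> ('b \<times> 'b) set \<Rightarrow> (nat \<Rightarrow> 'b) set" where
  "indS VF EF VG EG = {\<phi> \<in> VF \<rightarrow>\<^sub>E VG. inj_on \<phi> VF \<and> is_ind VF EF EG \<phi>}"
definition allinj :: "nat set \<Rightarrow> 'b set \<Rightarrow> (nat \<Rightarrow> 'b) set" where
  "allinj VF VG = {\<phi> \<in> VF \<rightarrow>\<^sub>E VG. inj_on \<phi> VF}"

lemma allinj_card: "finite VF \<Longrightarrow> finite VG \<Longrightarrow>
  card (allinj VF VG) = (\<Prod>i\<in>{0..<card VF}. card VG - i)"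
  unfolding allinj_def using card_inj_on_subset_funcset[of VF VG VF] by simp

lemma allinj_empty: "finite VF \<Longrightarrow> finite VG \<Longrightarrow> card VF > card VG \<Longrightarrow> allinj VF VG = {}"
proof (rule ccontr)
  assume fv: "finite VF" "finite VG" "card VF > card VG" "allinj VF VG \<noteq> {}"
  then obtain \<phi> where p: "\<phi> \<in> VF \<rightarrow>\<^sub>E VG" "inj_on \<phi> VF" unfolding allinj_def by auto
  have "\<phi> \<in> VF \<rightarrow> VG" using p(1) by (simp add: PiE_iff Pi_iff)
  then have "card VF \<le> card VG" using card_inj p(2) fv(2) by blast
  then show False using fv(3) by simp
qed

lemma fin_sets:
  assumes "finite VF" "finite VG"
  shows "finite (homS VF EF VG EG)" "finite (injS VF EF VG EG)" "finite (indS VF EF VG EG)"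
    "finite (allinj VF VG)"
proof -
  have f: "finite (VF \<rightarrow>\<^sub>E VG)" using assms by (simp add: finite_PiE)
  show "finite (homS VF EF VG EG)" unfolding homS_def by (rule finite_subset[OF _ f]) auto
  show "finite (injS VF EF VG EG)" unfolding injS_def by (rule finite_subset[OF _ f]) auto
  show "finite (indS VF EF VG EG)" unfolding indS_def by (rule finite_subset[OF _ f]) auto
  show "finite (allinj VF VG)" unfolding allinj_def by (rule finite_subset[OF _ f]) auto
qed

lemma inj_dens_eq: assumes "finite VF" "finite VG"
  shows "inj_dens VF EF VG EG = real (card (injS VF EF VG EG)) / real (card (allinj VF VG))"
proof (cases "card VF > card VG")
  case True thus ?thesis using allinj_empty[OF assms True] by (simp add: inj_dens_def)
next
  case False thus ?thesis by (simp add: inj_dens_def injS_def allinj_def)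
qed

lemma ind_dens_eq: assumes "finite VF" "finite VG"
  shows "ind_dens VF EF VG EG = real (card (indS VF EF VG EG)) / real (card (allinj VF VG))"
proof (cases "card VF > card VG")
  case True thus ?thesis using allinj_empty[OF assms True] by (simp add: ind_dens_def)
next
  case False thus ?thesis by (simp add: ind_dens_def indS_def allinj_def)
qed

lemma hom_dens_eq: assumes "finite VF"
  shows "hom_dens VF EF VG EG = real (card (homS VF EF VG EG)) / real (card VG ^ card VF)"
  using assms by (simp add: hom_dens_def homS_def card_funcsetE)

lemma hom_trancl: assumes "trans EG" shows "is_hom EF EG \<phi> \<longleftrightarrow> is_hom (EF\<^sup>+) EG \<phi>"
proof
  assume h: "is_hom EF EG \<phi>"
  show "is_hom (EF\<^sup>+) EG \<phi>" unfolding is_hom_def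
  proof (intro allI impI)
    fix i j assume "(i,j) \<in> EF\<^sup>+"
    then show "(\<phi> i, \<phi> j) \<in> EG"
    proof (induction rule: trancl_induct)
      case (base y) then show ?case using h by (auto simp: is_hom_def)
    next
      case (step y z) then show ?case using h assms by (auto simp: is_hom_def trans_def)
    qed
  qed
next
  assume "is_hom (EF\<^sup>+) EG \<phi>" then show "is_hom EF EG \<phi>" by (auto simp: is_hom_def)
qed

lemma homS_trancl: "trans EG \<Longrightarrow> homS VF EF VG EG = homS VF (EF\<^sup>+) VG EG"
  "trans EG \<Longrightarrow> injS VF EF VG EG = injS VF (EF\<^sup>+) VG EG"
  using hom_trancl by (auto simp: homS_def injS_def)

lemma cyclic_empty:
  assumes "is_poset VG EG" "x \<in> VF" "(x,x) \<in> EF\<^sup>+"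
  shows "homS VF EF VG EG = {}" "injS VF EF VG EG = {}"
proof -
  have "\<not> (\<phi> \<in> VF \<rightarrow>\<^sub>E VG \<and> is_hom (EF\<^sup>+) EG \<phi>)" for \<phi>
    using assms unfolding is_poset_def is_hom_def by (auto simp: PiE_iff)
  then show "homS VF EF VG EG = {}" "injS VF EF VG EG = {}"
    using homS_trancl assms(1) unfolding is_poset_def homS_def injS_def by blast+
qed

lemma acyclic_poset:
  assumes "is_digraph VF EF" "\<forall>x\<in>VF. (x,x) \<notin> EF\<^sup>+"
  shows "is_poset VF (EF\<^sup>+)"
proof -
  have s: "EF \<subseteq> VF \<times> VF" using assms(1) unfolding is_digraph_def by simp
  have "EF\<^sup>+ \<subseteq> VF \<times> VF" by (rule trancl_subset_Sigma[OF s])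
  moreover have "trans (EF\<^sup>+)" by (rule trans_trancl)
  ultimately show ?thesis using assms unfolding is_poset_def is_digraph_def by simp
qed

lemma ind_nonposet:
  assumes "is_digraph VF EF" "\<not> is_poset VF EF" "is_poset VG EG"
  shows "indS VF EF VG EG = {}"
proof (rule ccontr)
  assume "indS VF EF VG EG \<noteq> {}"
  then obtain \<phi> where p: "\<phi> \<in> VF \<rightarrow>\<^sub>E VG" "is_ind VF EF EG \<phi>" unfolding indS_def by auto
  have s: "EF \<subseteq> VF \<times> VF" using assms(1) unfolding is_digraph_def by simp
  have irrG: "\<forall>x\<in>VG. (x,x) \<notin> EG" and trG: "trans EG" using assms(3) unfolding is_poset_def by auto
  have irr: "\<forall>x\<in>VF. (x,x) \<notin> EF"
  proof
    fix x assume x: "x \<in> VF"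
    then have "\<phi> x \<in> VG" using p(1) by auto
    then have "(\<phi> x, \<phi> x) \<notin> EG" using irrG by blast
    then show "(x,x) \<notin> EF" using p(2) x unfolding is_ind_def by blast
  qed
  have "trans EF"
  proof (rule transI)
    fix x y z assume xy: "(x,y) \<in> EF" and yz: "(y,z) \<in> EF"
    have v: "x \<in> VF" "y \<in> VF" "z \<in> VF" using xy yz s by auto
    have "(\<phi> x, \<phi> y) \<in> EG" "(\<phi> y, \<phi> z) \<in> EG" using p(2) v xy yz unfolding is_ind_def by blast+
    then have "(\<phi> x, \<phi> z) \<in> EG" using trG by (meson transD)
    then show "(x,z) \<in> EF" using p(2) v unfolding is_ind_def by blast
  qed
  then show False using assms(1,2) irr unfolding is_poset_def by auto
qed



definition Retr :: "nat set \<Rightarrow> (nat \<Rightarrow> nat) set" where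
  "Retr A = {r \<in> A \<rightarrow>\<^sub>E A. \<forall>i\<in>A. r (r i) = r i \<and> r i \<le> i}"
definition qE :: "(nat \<Rightarrow> nat) \<Rightarrow> (nat \<times> nat) set \<Rightarrow> (nat \<times> nat) set" where
  "qE r EF = (\<lambda>(i,j). (r i, r j)) ` EF"
definition kr :: "nat set \<Rightarrow> (nat \<Rightarrow> 'b) \<Rightarrow> nat \<Rightarrow> nat" where
  "kr A \<phi> = (\<lambda>i. if i \<in> A then (LEAST j. j \<in> A \<and> \<phi> j = \<phi> i) else undefined)"

lemma kr_props:
  assumes "i \<in> A"
  shows "kr A \<phi> i \<in> A" "\<phi> (kr A \<phi> i) = \<phi> i" "kr A \<phi> i \<le> i"
proof -
  have ex: "i \<in> A \<and> \<phi> i = \<phi> i" using assms by simp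
  have "kr A \<phi> i = (LEAST j. j \<in> A \<and> \<phi> j = \<phi> i)" using assms by (simp add: kr_def)
  with LeastI[of "\<lambda>j. j \<in> A \<and> \<phi> j = \<phi> i", OF ex] Least_le[of "\<lambda>j. j \<in> A \<and> \<phi> j = \<phi> i", OF ex]
  show "kr A \<phi> i \<in> A" "\<phi> (kr A \<phi> i) = \<phi> i" "kr A \<phi> i \<le> i" by auto
qed

lemma kr_app: "i \<in> A \<Longrightarrow> kr A \<phi> i = (LEAST j. j \<in> A \<and> \<phi> j = \<phi> i)"
  by (simp add: kr_def)

lemma kr_out: "i \<notin> A \<Longrightarrow> kr A \<phi> i = undefined"
  by (simp add: kr_def)

lemma kr_Retr: "kr A \<phi> \<in> Retr A"
proof -
  have idem: "kr A \<phi> (kr A \<phi> i) = kr A \<phi> i" if "i \<in> A" for i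
  proof -
    have m: "kr A \<phi> i \<in> A" "\<phi> (kr A \<phi> i) = \<phi> i" using kr_props[OF that, of \<phi>] by auto
    have "kr A \<phi> (kr A \<phi> i) = (LEAST j. j \<in> A \<and> \<phi> j = \<phi> (kr A \<phi> i))" by (rule kr_app[OF m(1)])
    also have "\<dots> = (LEAST j. j \<in> A \<and> \<phi> j = \<phi> i)" by (simp only: m(2))
    also have "\<dots> = kr A \<phi> i" by (rule kr_app[OF that, symmetric])
    finally show ?thesis .
  qed
  have "kr A \<phi> \<in> A \<rightarrow>\<^sub>E A"
    by (rule PiE_I) (auto intro: kr_props(1) kr_out)
  then show ?thesis using idem kr_props(3) unfolding Retr_def by blast
qed

lemma Retr_fin: "finite A \<Longrightarrow> finite (Retr A)"
  unfolding Retr_def by (rule finite_subset[of _ "A \<rightarrow>\<^sub>E A"]) (auto simp: finite_PiE)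

lemma Retr_image_sub: "r \<in> Retr A \<Longrightarrow> r ` A \<subseteq> A"
  unfolding Retr_def by auto

lemma Retr_fix: "r \<in> Retr A \<Longrightarrow> a \<in> r ` A \<Longrightarrow> r a = a"
  unfolding Retr_def by auto

lemma Retr_min: assumes "r \<in> Retr A" "i \<in> A" "j \<in> A" "r j = r i" shows "r i \<le> j"
proof -
  have "r j \<le> j" using assms(1,3) unfolding Retr_def by blast
  then show ?thesis using assms(4) by simp
qed



lemma kr_comp:
  assumes r: "r \<in> Retr A" and inj: "inj_on \<psi> (r ` A)"
  shows "kr A (restrict (\<psi> \<circ> r) A) = r"
proof
  fix i show "kr A (restrict (\<psi> \<circ> r) A) i = r i"
  proof (cases "i \<in> A")
    case False then show ?thesis using r by (auto simp: kr_def Retr_def PiE_iff extensional_def)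
  next
    case True
    have ri: "r i \<in> A" using r True unfolding Retr_def by auto
    have eq: "(j \<in> A \<and> restrict (\<psi> \<circ> r) A j = restrict (\<psi> \<circ> r) A i) \<longleftrightarrow> (j \<in> A \<and> r j = r i)" for j
      using inj True by (auto simp: inj_on_def)
    have "(LEAST j. j \<in> A \<and> r j = r i) = r i"
      by (rule Least_equality) (use ri r True Retr_fix Retr_min in auto)
    then show ?thesis using True eq by (simp add: kr_def)
  qed
qed

lemma fiber_bij:
  assumes r: "r \<in> Retr VF" and sub: "EF \<subseteq> VF \<times> VF"
  shows "bij_betw (\<lambda>\<phi>. restrict \<phi> (r ` VF))
           {\<phi> \<in> homS VF EF VG EG. kr VF \<phi> = r} (injS (r ` VF) (qE r EF) VG EG)"
proof (rule bij_betw_byWitness[where f' = "\<lambda>\<psi>. restrict (\<psi> \<circ> r) VF"])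
  have RA: "r ` VF \<subseteq> VF" using Retr_image_sub[OF r] .
  show "\<forall>a\<in>{\<phi> \<in> homS VF EF VG EG. kr VF \<phi> = r}. restrict (restrict a (r ` VF) \<circ> r) VF = a"
  proof (intro ballI ext)
    fix \<phi> i assume a: "\<phi> \<in> {\<phi> \<in> homS VF EF VG EG. kr VF \<phi> = r}"
    show "restrict (restrict \<phi> (r ` VF) \<circ> r) VF i = \<phi> i"
    proof (cases "i \<in> VF")
      case True then show ?thesis using kr_props(2)[OF True, of \<phi>] a by auto
    next
      case False then show ?thesis using a by (auto simp: homS_def PiE_iff extensional_def)
    qed
  qed
  show "\<forall>a'\<in>injS (r ` VF) (qE r EF) VG EG. restrict (restrict (a' \<circ> r) VF) (r ` VF) = a'"
  proof (intro ballI ext)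
    fix \<psi> a assume a: "\<psi> \<in> injS (r ` VF) (qE r EF) VG EG"
    show "restrict (restrict (\<psi> \<circ> r) VF) (r ` VF) a = \<psi> a"
    proof (cases "a \<in> r ` VF")
      case True then show ?thesis using RA Retr_fix[OF r True] by auto
    next
      case False then show ?thesis using a by (auto simp: injS_def PiE_iff extensional_def)
    qed
  qed
  show "(\<lambda>\<phi>. restrict \<phi> (r ` VF)) ` {\<phi> \<in> homS VF EF VG EG. kr VF \<phi> = r} \<subseteq> injS (r ` VF) (qE r EF) VG EG"
  proof
    fix \<psi> assume "\<psi> \<in> (\<lambda>\<phi>. restrict \<phi> (r ` VF)) ` {\<phi> \<in> homS VF EF VG EG. kr VF \<phi> = r}"
    then obtain \<phi> where p: "\<phi> \<in> homS VF EF VG EG" "kr VF \<phi> = r" and psi: "\<psi> = restrict \<phi> (r ` VF)" by auto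
    have fx: "\<phi> (r i) = \<phi> i" if "i \<in> VF" for i using kr_props(2)[OF that, of \<phi>] p(2) by simp
    have "\<psi> \<in> r ` VF \<rightarrow>\<^sub>E VG" using p(1) RA psi by (auto simp: homS_def)
    moreover have "inj_on \<psi> (r ` VF)"
    proof (rule inj_onI)
      fix a b assume ab: "a \<in> r ` VF" "b \<in> r ` VF" "\<psi> a = \<psi> b"
      then obtain i j where ij: "i \<in> VF" "j \<in> VF" "a = r i" "b = r j" by auto
      have "\<phi> i = \<phi> j" using ab ij psi fx by auto
      then have "kr VF \<phi> i = kr VF \<phi> j" using ij by (simp add: kr_def)
      then show "a = b" using ij p(2) by simp
    qed
    moreover have "is_hom (qE r EF) EG \<psi>"
      unfolding is_hom_def qE_def
    proof (intro allI impI)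
      fix a b assume "(a, b) \<in> (\<lambda>(i, j). (r i, r j)) ` EF"
      then obtain i j where ij: "(i,j) \<in> EF" "a = r i" "b = r j" by auto
      then have "i \<in> VF" "j \<in> VF" using sub by auto
      then show "(\<psi> a, \<psi> b) \<in> EG" using ij p(1) psi fx by (auto simp: homS_def is_hom_def)
    qed
    ultimately show "\<psi> \<in> injS (r ` VF) (qE r EF) VG EG" by (simp add: injS_def)
  qed
  show "(\<lambda>\<psi>. restrict (\<psi> \<circ> r) VF) ` injS (r ` VF) (qE r EF) VG EG \<subseteq> {\<phi> \<in> homS VF EF VG EG. kr VF \<phi> = r}"
  proof
    fix \<phi> assume "\<phi> \<in> (\<lambda>\<psi>. restrict (\<psi> \<circ> r) VF) ` injS (r ` VF) (qE r EF) VG EG"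
    then obtain \<psi> where q: "\<psi> \<in> injS (r ` VF) (qE r EF) VG EG" and phi: "\<phi> = restrict (\<psi> \<circ> r) VF" by auto
    have "\<phi> \<in> VF \<rightarrow>\<^sub>E VG" using q phi by (auto simp: injS_def PiE_iff)
    moreover have "is_hom EF EG \<phi>" unfolding is_hom_def
    proof (intro allI impI)
      fix i j assume ij: "(i,j) \<in> EF"
      then have "(r i, r j) \<in> qE r EF" by (force simp: qE_def)
      then show "(\<phi> i, \<phi> j) \<in> EG" using q ij sub phi by (auto simp: injS_def is_hom_def)
    qed
    moreover have "kr VF \<phi> = r"
    proof -
      have inj: "inj_on \<psi> (r ` VF)" using q by (simp add: injS_def)
      show ?thesis using kr_comp[OF r inj] phi by simp
    qed
    ultimately show "\<phi> \<in> {\<phi> \<in> homS VF EF VG EG. kr VF \<phi> = r}" by (simp add: homS_def)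
  qed
qed



lemma hom_decomp:
  assumes fin: "finite VF" "finite VG" and sub: "EF \<subseteq> VF \<times> VF"
  shows "card (homS VF EF VG EG) = (\<Sum>r\<in>Retr VF. card (injS (r ` VF) (qE r EF) VG EG))"
proof -
  have U: "homS VF EF VG EG = (\<Union>r\<in>Retr VF. {\<phi> \<in> homS VF EF VG EG. kr VF \<phi> = r})"
    using kr_Retr by blast
  have "card (homS VF EF VG EG) = (\<Sum>r\<in>Retr VF. card {\<phi> \<in> homS VF EF VG EG. kr VF \<phi> = r})"
    apply (subst U)
    apply (rule card_UN_disjoint)
    using Retr_fin[OF fin(1)] fin_sets(1)[OF fin] by auto
  also have "\<dots> = (\<Sum>r\<in>Retr VF. card (injS (r ` VF) (qE r EF) VG EG))"
    by (rule sum.cong[OF refl]) (rule bij_betw_same_card[OF fiber_bij[OF _ sub]])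
  finally show ?thesis .
qed

definition idr :: "nat set \<Rightarrow> nat \<Rightarrow> nat" where "idr A = (\<lambda>i. if i \<in> A then i else undefined)"

lemma idr_Retr: "idr A \<in> Retr A" by (auto simp: idr_def Retr_def)

lemma idr_q: "EF \<subseteq> A \<times> A \<Longrightarrow> qE (idr A) EF = EF"
  unfolding qE_def idr_def by (force simp: image_iff)

lemma idr_img: "idr A ` A = A" by (auto simp: idr_def)

lemma Retr_smaller:
  assumes fin: "finite A" and r: "r \<in> Retr A" "r \<noteq> idr A"
  shows "card (r ` A) < card A"
proof (rule ccontr)
  assume "\<not> card (r ` A) < card A"
  then have "card (r ` A) = card A" using card_mono[OF fin Retr_image_sub[OF r(1)]] by simp
  then have "r ` A = A" using card_subset_eq[OF fin Retr_image_sub[OF r(1)]] by simp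
  then have "\<forall>i\<in>A. r i = i" using Retr_fix[OF r(1)] by auto
  then have "r = idr A" using r(1) by (auto simp: idr_def Retr_def PiE_iff extensional_def)
  with r(2) show False by simp
qed

lemma Retr_digraph:
  assumes "is_digraph VF EF" "r \<in> Retr VF"
  shows "is_digraph (r ` VF) (qE r EF)"
  using assms Retr_image_sub[OF assms(2)] unfolding is_digraph_def qE_def
  by (auto intro: finite_subset)



definition Sup_rel :: "nat set \<Rightarrow> (nat \<times> nat) set \<Rightarrow> (nat \<times> nat) set set" where
  "Sup_rel VF EF = {E'. EF \<subseteq> E' \<and> E' \<subseteq> VF \<times> VF}"

lemma Sup_rel_fin: "finite VF \<Longrightarrow> finite (Sup_rel VF EF)"
proof -
  assume "finite VF"
  then have "finite (Pow (VF \<times> VF))" by simp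
  moreover have "Sup_rel VF EF \<subseteq> Pow (VF \<times> VF)" unfolding Sup_rel_def by blast
  ultimately show ?thesis by (rule finite_subset[rotated])
qed

lemma inj_ind_decomp:
  assumes fin: "finite VF" "finite VG" and sub: "EF \<subseteq> VF \<times> VF"
  shows "card (injS VF EF VG EG) = (\<Sum>E'\<in>Sup_rel VF EF. card (indS VF E' VG EG))"
proof -
  have U: "injS VF EF VG EG = (\<Union>E'\<in>Sup_rel VF EF. indS VF E' VG EG)"
  proof
    show "injS VF EF VG EG \<subseteq> (\<Union>E'\<in>Sup_rel VF EF. indS VF E' VG EG)"
    proof
      fix \<phi> assume p: "\<phi> \<in> injS VF EF VG EG"
      define P where "P = {(i,j). i \<in> VF \<and> j \<in> VF \<and> (\<phi> i, \<phi> j) \<in> EG}"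
      have "EF \<subseteq> P"
      proof
        fix x assume x: "x \<in> EF"
        obtain i j where ij: "x = (i,j)" by (cases x)
        have "(\<phi> i, \<phi> j) \<in> EG" using p x ij unfolding injS_def is_hom_def by blast
        then show "x \<in> P" using sub x ij unfolding P_def by blast
      qed
      then have "P \<in> Sup_rel VF EF" unfolding Sup_rel_def P_def by blast
      moreover have "\<phi> \<in> indS VF P VG EG" using p unfolding injS_def indS_def is_ind_def P_def by blast
      ultimately show "\<phi> \<in> (\<Union>E'\<in>Sup_rel VF EF. indS VF E' VG EG)" by blast
    qed
    show "(\<Union>E'\<in>Sup_rel VF EF. indS VF E' VG EG) \<subseteq> injS VF EF VG EG"
    proof
      fix \<phi> assume "\<phi> \<in> (\<Union>E'\<in>Sup_rel VF EF. indS VF E' VG EG)"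
      then obtain E' where e: "E' \<in> Sup_rel VF EF" "\<phi> \<in> indS VF E' VG EG" by blast
      have "is_hom EF EG \<phi>" unfolding is_hom_def
      proof (intro allI impI)
        fix i j assume ij: "(i,j) \<in> EF"
        then have "i \<in> VF" "j \<in> VF" "(i,j) \<in> E'" using sub e(1) unfolding Sup_rel_def by auto
        then show "(\<phi> i, \<phi> j) \<in> EG" using e(2) unfolding indS_def is_ind_def by blast
      qed
      then show "\<phi> \<in> injS VF EF VG EG" using e(2) unfolding indS_def injS_def by blast
    qed
  qed
  have disj: "indS VF E1 VG EG \<inter> indS VF E2 VG EG = {}"
    if "E1 \<in> Sup_rel VF EF" "E2 \<in> Sup_rel VF EF" "E1 \<noteq> E2" for E1 E2
  proof (rule ccontr)
    assume "indS VF E1 VG EG \<inter> indS VF E2 VG EG \<noteq> {}"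
    then obtain \<phi> where p: "is_ind VF E1 EG \<phi>" "is_ind VF E2 EG \<phi>" unfolding indS_def by blast
    have s: "E1 \<subseteq> VF \<times> VF" "E2 \<subseteq> VF \<times> VF" using that unfolding Sup_rel_def by auto
    have "E1 = E2"
    proof
      show "E1 \<subseteq> E2"
      proof
        fix x assume x: "x \<in> E1"
        obtain i j where ij: "x = (i,j)" by (cases x)
        then show "x \<in> E2" using x s p unfolding is_ind_def by blast
      qed
      show "E2 \<subseteq> E1"
      proof
        fix x assume x: "x \<in> E2"
        obtain i j where ij: "x = (i,j)" by (cases x)
        then show "x \<in> E1" using x s p unfolding is_ind_def by blast
      qed
    qed
    then show False using that(3) by simp
  qed
  show ?thesis
    apply (subst U)
    apply (rule card_UN_disjoint)
    using Sup_rel_fin[OF fin(1)] fin_sets(3)[OF fin] disj by auto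
qed

lemma EF_in_Sup: "EF \<subseteq> VF \<times> VF \<Longrightarrow> EF \<in> Sup_rel VF EF"
  unfolding Sup_rel_def by blast

lemma inj_ind_dens:
  assumes fin: "finite VF" "finite VG" and sub: "EF \<subseteq> VF \<times> VF"
  shows "inj_dens VF EF VG EG = (\<Sum>E'\<in>Sup_rel VF EF. ind_dens VF E' VG EG)"
proof -
  have "inj_dens VF EF VG EG = real (card (injS VF EF VG EG)) / real (card (allinj VF VG))"
    by (rule inj_dens_eq[OF fin])
  also have "\<dots> = (\<Sum>E'\<in>Sup_rel VF EF. real (card (indS VF E' VG EG)) / real (card (allinj VF VG)))"
    by (simp add: inj_ind_decomp[OF fin sub] sum_divide_distrib)
  also have "\<dots> = (\<Sum>E'\<in>Sup_rel VF EF. ind_dens VF E' VG EG)"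
    by (rule sum.cong[OF refl]) (simp add: ind_dens_eq[OF fin])
  finally show ?thesis .
qed

lemma evconst_conv: "eventually (\<lambda>n. f n = c) sequentially \<Longrightarrow> convergent f"
  by (rule convergentI, rule tendsto_eventually)

lemma conv_evconst:
  assumes ev: "eventually (\<lambda>n. D n = d) sequentially" and d: "d > 0"
    and conv: "convergent (\<lambda>n. real (c n) / real (D n))"
  shows "\<exists>v. eventually (\<lambda>n. c n = v) sequentially"
proof -
  have "Cauchy (\<lambda>n. real (c n) / real (D n))" using conv by (rule convergent_Cauchy)
  moreover have "(0::real) < 1 / real d" using d by simp
  ultimately obtain M where M: "\<forall>m\<ge>M. \<forall>n\<ge>M. norm (real (c m) / real (D m) - real (c n) / real (D n)) < 1 / real d"
    using CauchyD by blast
  obtain M0 where M0: "\<forall>n\<ge>M0. D n = d" using ev unfolding eventually_sequentially by blast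
  define K where "K = max M M0"
  have "c n = c K" if n: "n \<ge> K" for n
  proof -
    have "norm (real (c n) / real (D n) - real (c K) / real (D K)) < 1 / real d"
      using M n unfolding K_def by auto
    moreover have "D n = d" "D K = d" using M0 n unfolding K_def by auto
    ultimately have "\<bar>real (c n) / real d - real (c K) / real d\<bar> < 1 / real d" by simp
    then have "\<bar>(real (c n) - real (c K)) / real d\<bar> < 1 / real d" by (simp add: diff_divide_distrib)
    then have "\<bar>real (c n) - real (c K)\<bar> / real d < 1 / real d" by simp
    then have "\<bar>real (c n) - real (c K)\<bar> < 1" using d by (simp add: divide_less_cancel)
    then show ?thesis by linarith
  qed
  then show ?thesis unfolding eventually_sequentially by blast
qed

lemma antichain_dens:
  assumes "finite VG"
  shows "inj_dens {0..<k} {} VG EG = (if k \<le> card VG then 1 else 0)"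
proof -
  have e: "injS {0..<k} {} VG EG = allinj {0..<k} VG"
    unfolding injS_def allinj_def is_hom_def by simp
  show ?thesis
  proof (cases "k \<le> card VG")
    case True
    have "card (allinj {0..<k} VG) = (\<Prod>i\<in>{0..<k}. card VG - i)"
      using allinj_card[of "{0..<k}" VG] assms by simp
    moreover have "(\<Prod>i\<in>{0..<k}. card VG - i) > 0" using True by (auto intro: prod_pos)
    ultimately show ?thesis using True inj_dens_eq[of "{0..<k}" VG "{}" EG] assms e by simp
  next
    case False then show ?thesis by (simp add: inj_dens_def)
  qed
qed

lemma card_conv_from_antichain:
  assumes fin: "\<And>n. finite (V n)"
    and conv: "\<And>k::nat. k \<ge> 1 \<Longrightarrow> convergent (\<lambda>n. inj_dens {0..<k} {} (V n) (E n))"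
  shows "card_converges (\<lambda>n. card (V n))"
proof -
  have dich: "eventually (\<lambda>n. k \<le> card (V n)) sequentially \<or> eventually (\<lambda>n. \<not> k \<le> card (V n)) sequentially" for k
  proof (cases "k = 0")
    case True then show ?thesis by simp
  next
    case False
    define c where "c n = (if k \<le> card (V n) then 1 else 0 :: nat)" for n
    have eq: "(\<lambda>n. real (c n) / real ((\<lambda>n. 1::nat) n)) = (\<lambda>n. inj_dens {0..<k} {} (V n) (E n))"
      by (rule ext) (simp add: c_def antichain_dens[OF fin])
    have "convergent (\<lambda>n. real (c n) / real ((\<lambda>n. 1::nat) n))"
      unfolding eq using conv[of k] False by simp
    then obtain v where v: "eventually (\<lambda>n. c n = v) sequentially"
      using conv_evconst[of "\<lambda>n. 1::nat" 1 c] by auto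
    show ?thesis
    proof (cases "v = 1")
      case True
      have "eventually (\<lambda>n. k \<le> card (V n)) sequentially"
        using v by (rule eventually_mono) (auto simp: c_def True split: if_splits)
      then show ?thesis by blast
    next
      case False
      have "eventually (\<lambda>n. \<not> k \<le> card (V n)) sequentially"
        using v by (rule eventually_mono) (use False in \<open>auto simp: c_def split: if_splits\<close>)
      then show ?thesis by blast
    qed
  qed
  show ?thesis
  proof (cases "\<forall>k. eventually (\<lambda>n. k \<le> card (V n)) sequentially")
    case True
    then have "filterlim (\<lambda>n. card (V n)) at_top sequentially" by (simp add: filterlim_at_top)
    then show ?thesis unfolding card_converges_def by blast
  next
    case False
    define k where "k = (LEAST k. \<not> eventually (\<lambda>n. k \<le> card (V n)) sequentially)"
    have nk: "\<not> eventually (\<lambda>n. k \<le> card (V n)) sequentially"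
      using False LeastI_ex[of "\<lambda>k. \<not> eventually (\<lambda>n. k \<le> card (V n)) sequentially"] unfolding k_def by blast
    have k0: "k \<noteq> 0"
    proof
      assume "k = 0"
      then have "eventually (\<lambda>n. k \<le> card (V n)) sequentially" by simp
      with nk show False by blast
    qed
    have "eventually (\<lambda>n. k - 1 \<le> card (V n)) sequentially"
      using not_less_Least[of "k - 1" "\<lambda>k. \<not> eventually (\<lambda>n. k \<le> card (V n)) sequentially"] k0
      unfolding k_def[symmetric] by auto
    moreover have "eventually (\<lambda>n. \<not> k \<le> card (V n)) sequentially" using dich[of k] nk by blast
    ultimately have "eventually (\<lambda>n. card (V n) = k - 1) sequentially"
      by (rule eventually_elim2) auto
    then show ?thesis unfolding card_converges_def by blast
  qed
qed



lemma prod_lower: "k \<le> N \<Longrightarrow> (N - k) ^ k \<le> (\<Prod>i\<in>{0..<k}. N - i :: nat)"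
proof -
  assume "k \<le> N"
  have "(N - k) ^ k = (\<Prod>i\<in>{0..<k}. N - k)" by simp
  also have "\<dots> \<le> (\<Prod>i\<in>{0..<k}. N - i)" by (rule prod_mono) auto
  finally show ?thesis .
qed

lemma real_ineq1:
  fixes h i a T :: real
  assumes "0 \<le> i" "i \<le> h" "h - i \<le> T - a" "i \<le> a" "0 < a" "a \<le> T"
  shows "\<bar>h / T - i / a\<bar> \<le> 1 - a / T"
proof -
  have T: "T > 0" using assms by simp
  have r: "i / a \<le> 1" using assms by simp
  have s: "0 \<le> 1 - a / T" using assms T by simp
  have e1: "i / T \<le> i / a" using assms by (intro divide_left_mono) auto
  have e2: "h / T - i / T \<le> 1 - a / T"
  proof -
    have "h / T - i / T = (h - i) / T" by (simp add: diff_divide_distrib)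
    also have "\<dots> \<le> (T - a) / T" using assms T by (intro divide_right_mono) auto
    also have "\<dots> = 1 - a / T" using T by (simp add: diff_divide_distrib)
    finally show ?thesis .
  qed
  have e3: "i / a - i / T = (i / a) * (1 - a / T)" using assms T by (simp add: field_simps)
  have e4: "(i / a) * (1 - a / T) \<le> 1 - a / T" by (rule mult_left_le_one_le[OF s _ r]) (rule divide_nonneg_pos, use assms in auto)
  have e5: "i / T \<le> h / T" using assms T by (intro divide_right_mono) auto
  show ?thesis using e1 e2 e3 e4 e5 by (simp add: abs_le_iff)
qed

lemma bern:
  fixes N k :: nat
  assumes "k \<le> N" "0 < N"
  shows "1 - real ((N - k) ^ k) / real (N ^ k) \<le> real k * real k / real N"
proof -
  have "real ((N - k) ^ k) / real (N ^ k) = (real (N - k) / real N) ^ k"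
    by (simp add: power_divide)
  also have "real (N - k) / real N = 1 + (- (real k / real N))"
    using assms by (simp add: of_nat_diff field_simps)
  finally have eq: "real ((N - k) ^ k) / real (N ^ k) = (1 + (- (real k / real N))) ^ k" .
  have "-1 \<le> - (real k / real N)" using assms by simp
  from Bernoulli_inequality[OF this, of k]
  have "1 + real k * (- (real k / real N)) \<le> (1 + (- (real k / real N))) ^ k" .
  then show ?thesis unfolding eq by (simp add: field_simps)
qed

lemma dens_bound:
  fixes VF :: "nat set"
  assumes fin: "finite VF" "finite VG" and kN: "card VF \<le> card VG" and N0: "card VG > 0"
  shows "\<bar>hom_dens VF EF VG EG - inj_dens VF EF VG EG\<bar> \<le> real (card VF) * real (card VF) / real (card VG)"
proof -
  define k where "k = card VF"
  define N where "N = card VG"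
  define hs where "hs = homS VF EF VG EG"
  define js where "js = injS VF EF VG EG"
  define as where "as = allinj VF VG"
  define ts where "ts = VF \<rightarrow>\<^sub>E VG"
  have ft: "finite ts" unfolding ts_def using fin by (simp add: finite_PiE)
  have s1: "js \<subseteq> hs" unfolding js_def hs_def injS_def homS_def by blast
  have s2: "js \<subseteq> as" unfolding js_def as_def injS_def allinj_def by blast
  have s3: "as \<subseteq> ts" unfolding as_def ts_def allinj_def by blast
  have s4: "hs \<subseteq> ts" unfolding hs_def ts_def homS_def by blast
  have s5: "hs - js \<subseteq> ts - as"
  proof
    fix x assume x: "x \<in> hs - js"
    then have a: "x \<in> ts" "is_hom EF EG x" "x \<notin> js" using s4 unfolding hs_def homS_def by auto
    then have "\<not> inj_on x VF" unfolding js_def injS_def ts_def by simp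
    then have "x \<notin> as" unfolding as_def allinj_def by simp
    then show "x \<in> ts - as" using a by simp
  qed
  have fh: "finite hs" using s4 ft finite_subset by blast
  have fa: "finite as" using s3 ft finite_subset by blast
  have c1: "card js \<le> card hs" using card_mono[OF fh s1] .
  have c2: "card js \<le> card as" using card_mono[OF fa s2] .
  have c3: "card as \<le> card ts" using card_mono[OF ft s3] .
  have "card (hs - js) \<le> card (ts - as)" using card_mono[OF _ s5] ft by simp
  then have c4: "card hs - card js \<le> card ts - card as"
    using card_Diff_subset[OF finite_subset[OF s1 fh] s1] card_Diff_subset[OF finite_subset[OF s3 ft] s3] by simp
  have cT: "card ts = N ^ k" unfolding ts_def N_def k_def using fin by (simp add: card_funcsetE)
  have ca: "card as = (\<Prod>i\<in>{0..<k}. N - i)" unfolding as_def k_def N_def using allinj_card[OF fin] .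
  have apos: "card as > 0" unfolding ca using kN unfolding k_def N_def by (auto intro: prod_pos)
  have alow: "(N - k) ^ k \<le> card as" unfolding ca using prod_lower kN unfolding k_def N_def by blast
  have hd: "hom_dens VF EF VG EG = real (card hs) / real (card ts)"
    unfolding hs_def cT using hom_dens_eq[OF fin(1)] unfolding k_def N_def by simp
  have id: "inj_dens VF EF VG EG = real (card js) / real (card as)"
    unfolding js_def as_def by (rule inj_dens_eq[OF fin])
  have "\<bar>real (card hs) / real (card ts) - real (card js) / real (card as)\<bar> \<le> 1 - real (card as) / real (card ts)"
  proof (rule real_ineq1)
    have "real (card hs - card js) \<le> real (card ts - card as)" using c4 by (simp only: of_nat_le_iff)
    then show "real (card hs) - real (card js) \<le> real (card ts) - real (card as)"
      by (simp only: of_nat_diff[OF c1] of_nat_diff[OF c3])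
    show "0 \<le> real (card js)" by simp
    show "real (card js) \<le> real (card hs)" using c1 by (simp only: of_nat_le_iff)
    show "real (card js) \<le> real (card as)" using c2 by (simp only: of_nat_le_iff)
    show "0 < real (card as)" using apos by (simp only: of_nat_0_less_iff)
    show "real (card as) \<le> real (card ts)" using c3 by (simp only: of_nat_le_iff)
  qed
  also have "\<dots> \<le> 1 - real ((N - k) ^ k) / real (N ^ k)"
    unfolding cT using alow N0 unfolding N_def by (intro diff_left_mono divide_right_mono) auto
  also have "\<dots> \<le> real k * real k / real N" using bern kN N0 unfolding k_def N_def by blast
  finally show ?thesis unfolding hd id k_def N_def .
qed

lemma inf_case_tendsto:
  fixes VF :: "nat set"
  assumes fin: "\<And>n. finite (V n)" and lim: "filterlim (\<lambda>n. card (V n)) at_top sequentially"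
    and finF: "finite VF"
  shows "((\<lambda>n. hom_dens VF EF (V n) (E n) - inj_dens VF EF (V n) (E n)) \<longlongrightarrow> 0) sequentially"
proof (rule Lim_null_comparison)
  define k where "k = card VF"
  have ev: "eventually (\<lambda>n. max k 1 \<le> card (V n)) sequentially" using lim unfolding filterlim_at_top by blast
  show "eventually (\<lambda>n. norm (hom_dens VF EF (V n) (E n) - inj_dens VF EF (V n) (E n))
          \<le> real k * real k * inverse (real (card (V n)))) sequentially"
    using ev
  proof (rule eventually_mono)
    fix n assume mx: "max k 1 \<le> card (V n)"
    have b: "\<bar>hom_dens VF EF (V n) (E n) - inj_dens VF EF (V n) (E n)\<bar> \<le> real k * real k / real (card (V n))"
      unfolding k_def by (rule dens_bound[OF finF fin]) (use mx k_def in auto)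
    then show "norm (hom_dens VF EF (V n) (E n) - inj_dens VF EF (V n) (E n))
          \<le> real k * real k * inverse (real (card (V n)))"
      by (simp add: divide_inverse)
  qed
  have "filterlim (\<lambda>n. real (card (V n))) at_top sequentially"
    by (rule filterlim_compose[OF filterlim_real_sequentially lim])
  then have "((\<lambda>n. inverse (real (card (V n)))) \<longlongrightarrow> 0) sequentially"
    by (rule tendsto_inverse_0_at_top)
  then show "((\<lambda>n. real k * real k * inverse (real (card (V n)))) \<longlongrightarrow> 0) sequentially"
    by (rule tendsto_mult_right_zero)
qed

lemma inf_case_equiv:
  fixes VF :: "nat set"
  assumes fin: "\<And>n. finite (V n)" and lim: "filterlim (\<lambda>n. card (V n)) at_top sequentially"
    and finF: "finite VF"
  shows "convergent (\<lambda>n. hom_dens VF EF (V n) (E n)) \<longleftrightarrow> convergent (\<lambda>n. inj_dens VF EF (V n) (E n))"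
proof -
  have d: "convergent (\<lambda>n. hom_dens VF EF (V n) (E n) - inj_dens VF EF (V n) (E n))"
    using inf_case_tendsto[OF fin lim finF] by (rule convergentI)
  show ?thesis
  proof
    assume "convergent (\<lambda>n. hom_dens VF EF (V n) (E n))"
    from convergent_diff[OF this d] show "convergent (\<lambda>n. inj_dens VF EF (V n) (E n))" by simp
  next
    assume "convergent (\<lambda>n. inj_dens VF EF (V n) (E n))"
    from convergent_add[OF this d] show "convergent (\<lambda>n. hom_dens VF EF (V n) (E n))" by simp
  qed
qed



lemma evsum:
  assumes "finite A" "\<forall>a\<in>A. \<exists>v. eventually (\<lambda>n. f a n = v) sequentially"
  shows "\<exists>v. eventually (\<lambda>n. (\<Sum>a\<in>A. f a n) = (v::nat)) sequentially"
proof -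
  obtain g where g: "\<forall>a\<in>A. eventually (\<lambda>n. f a n = g a) sequentially" using assms(2) by metis
  have "eventually (\<lambda>n. \<forall>a\<in>A. f a n = g a) sequentially" by (rule eventually_ball_finite[OF assms(1) g])
  then have "eventually (\<lambda>n. (\<Sum>a\<in>A. f a n) = (\<Sum>a\<in>A. g a)) sequentially"
    by (rule eventually_mono) simp
  then show ?thesis by blast
qed

lemma const_hom:
  fixes F :: "nat set"
  assumes fin: "\<And>n. finite (V n)" and ev: "eventually (\<lambda>n. card (V n) = L) sequentially"
    and L: "L > 0" and finF: "finite F"
  shows "convergent (\<lambda>n. hom_dens F EF (V n) (E n)) \<longleftrightarrow>
         (\<exists>v. eventually (\<lambda>n. card (homS F EF (V n) (E n)) = v) sequentially)"
proof -
  have eq: "(\<lambda>n. hom_dens F EF (V n) (E n)) =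
      (\<lambda>n. real (card (homS F EF (V n) (E n))) / real ((\<lambda>n. card (V n) ^ card F) n))"
    by (rule ext) (simp add: hom_dens_eq[OF finF])
  have evD: "eventually (\<lambda>n. card (V n) ^ card F = L ^ card F) sequentially"
    using ev by (rule eventually_mono) simp
  show ?thesis
  proof
    assume c: "convergent (\<lambda>n. hom_dens F EF (V n) (E n))"
    have Lp: "L ^ card F > 0" using L by simp
    show "\<exists>v. eventually (\<lambda>n. card (homS F EF (V n) (E n)) = v) sequentially"
      using conv_evconst[where D="\<lambda>n. card (V n) ^ card F" and c="\<lambda>n. card (homS F EF (V n) (E n))", OF evD Lp] c
      unfolding eq by simp
  next
    assume "\<exists>v. eventually (\<lambda>n. card (homS F EF (V n) (E n)) = v) sequentially"
    then obtain v where v: "eventually (\<lambda>n. card (homS F EF (V n) (E n)) = v) sequentially" by blast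
    have "eventually (\<lambda>n. hom_dens F EF (V n) (E n) = real v / real (L ^ card F)) sequentially"
      using v evD by (rule eventually_elim2) (simp add: hom_dens_eq[OF finF])
    then show "convergent (\<lambda>n. hom_dens F EF (V n) (E n))" by (rule evconst_conv)
  qed
qed

lemma const_inj:
  fixes F :: "nat set"
  assumes fin: "\<And>n. finite (V n)" and ev: "eventually (\<lambda>n. card (V n) = L) sequentially"
    and finF: "finite F"
  shows "convergent (\<lambda>n. inj_dens F EF (V n) (E n)) \<longleftrightarrow>
         (\<exists>v. eventually (\<lambda>n. card (injS F EF (V n) (E n)) = v) sequentially)"
proof -
  define d where "d = (\<Prod>i\<in>{0..<card F}. L - i)"
  have eq: "(\<lambda>n. inj_dens F EF (V n) (E n)) =
      (\<lambda>n. real (card (injS F EF (V n) (E n))) / real ((\<lambda>n. card (allinj F (V n))) n))"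
    by (rule ext) (simp add: inj_dens_eq[OF finF fin])
  have evD: "eventually (\<lambda>n. card (allinj F (V n)) = d) sequentially"
    using ev by (rule eventually_mono) (simp add: allinj_card[OF finF fin] d_def)
  show ?thesis
  proof (cases "d > 0")
    case True
    show ?thesis
    proof
      assume c: "convergent (\<lambda>n. inj_dens F EF (V n) (E n))"
      show "\<exists>v. eventually (\<lambda>n. card (injS F EF (V n) (E n)) = v) sequentially"
        using conv_evconst[where D="\<lambda>n. card (allinj F (V n))" and c="\<lambda>n. card (injS F EF (V n) (E n))", OF evD True] c
        unfolding eq by simp
    next
      assume "\<exists>v. eventually (\<lambda>n. card (injS F EF (V n) (E n)) = v) sequentially"
      then obtain v where v: "eventually (\<lambda>n. card (injS F EF (V n) (E n)) = v) sequentially" by blast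
      have "eventually (\<lambda>n. inj_dens F EF (V n) (E n) = real v / real d) sequentially"
        using v evD by (rule eventually_elim2) (simp add: inj_dens_eq[OF finF fin])
      then show "convergent (\<lambda>n. inj_dens F EF (V n) (E n))" by (rule evconst_conv)
    qed
  next
    case False
    have z: "eventually (\<lambda>n. card (injS F EF (V n) (E n)) = 0) sequentially"
      using evD
    proof (rule eventually_mono)
      fix n assume "card (allinj F (V n)) = d"
      then have "allinj F (V n) = {}" using False fin_sets(4)[OF finF fin[of n]] by simp
      moreover have "injS F EF (V n) (E n) \<subseteq> allinj F (V n)" unfolding injS_def allinj_def by blast
      ultimately show "card (injS F EF (V n) (E n)) = 0" by simp
    qed
    have "eventually (\<lambda>n. inj_dens F EF (V n) (E n) = 0) sequentially"
      using z by (rule eventually_mono) (simp add: inj_dens_eq[OF finF fin])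
    then have "convergent (\<lambda>n. inj_dens F EF (V n) (E n))" by (rule evconst_conv)
    then show ?thesis using z by blast
  qed
qed



lemma poset_facts:
  assumes "is_poset VG EG"
  shows "finite VG" "VG \<noteq> {}" "trans EG" "card VG > 0"
  using assms unfolding is_poset_def is_digraph_def by (auto simp: card_gt_0_iff)

lemma A36:
  assumes posets: "\<And>n. is_poset (V n) (E n)"
  shows "(\<forall>(Q::nat set) EQ. is_poset Q EQ \<longrightarrow> convergent (\<lambda>n. ind_dens Q EQ (V n) (E n))) \<longleftrightarrow>
         (\<forall>(F::nat set) EF. is_digraph F EF \<longrightarrow> convergent (\<lambda>n. ind_dens F EF (V n) (E n)))"
proof
  assume c3: "\<forall>(Q::nat set) EQ. is_poset Q EQ \<longrightarrow> convergent (\<lambda>n. ind_dens Q EQ (V n) (E n))"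
  show "\<forall>(F::nat set) EF. is_digraph F EF \<longrightarrow> convergent (\<lambda>n. ind_dens F EF (V n) (E n))"
  proof (intro allI impI)
    fix F :: "nat set" and EF assume d: "is_digraph F EF"
    show "convergent (\<lambda>n. ind_dens F EF (V n) (E n))"
    proof (cases "is_poset F EF")
      case True then show ?thesis using c3 by blast
    next
      case False
      have "ind_dens F EF (V n) (E n) = 0" for n
        using ind_dens_eq[of F "V n" EF "E n"] ind_nonposet[OF d False posets[of n]]
          d poset_facts(1)[OF posets[of n]] unfolding is_digraph_def by simp
      then show ?thesis by (simp add: convergent_const)
    qed
  qed
next
  assume "\<forall>(F::nat set) EF. is_digraph F EF \<longrightarrow> convergent (\<lambda>n. ind_dens F EF (V n) (E n))"
  then show "\<forall>(Q::nat set) EQ. is_poset Q EQ \<longrightarrow> convergent (\<lambda>n. ind_dens Q EQ (V n) (E n))"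
    unfolding is_poset_def by blast
qed

lemma B25:
  assumes posets: "\<And>n. is_poset (V n) (E n)"
  shows "(\<forall>(Q::nat set) EQ. is_poset Q EQ \<longrightarrow> convergent (\<lambda>n. inj_dens Q EQ (V n) (E n))) \<longleftrightarrow>
         (\<forall>(F::nat set) EF. is_digraph F EF \<longrightarrow> convergent (\<lambda>n. inj_dens F EF (V n) (E n)))"
proof
  assume c3: "\<forall>(Q::nat set) EQ. is_poset Q EQ \<longrightarrow> convergent (\<lambda>n. inj_dens Q EQ (V n) (E n))"
  show "\<forall>(F::nat set) EF. is_digraph F EF \<longrightarrow> convergent (\<lambda>n. inj_dens F EF (V n) (E n))"
  proof (intro allI impI)
    fix F :: "nat set" and EF assume d: "is_digraph F EF"
    have finF: "finite F" using d unfolding is_digraph_def by simp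
    show "convergent (\<lambda>n. inj_dens F EF (V n) (E n))"
    proof (cases "\<forall>x\<in>F. (x,x) \<notin> EF\<^sup>+")
      case True
      have p: "is_poset F (EF\<^sup>+)" by (rule acyclic_poset[OF d True])
      have "inj_dens F EF (V n) (E n) = inj_dens F (EF\<^sup>+) (V n) (E n)" for n
        using inj_dens_eq[OF finF poset_facts(1)[OF posets[of n]]] homS_trancl(2)[OF poset_facts(3)[OF posets[of n]]]
        by metis
      then show ?thesis using c3 p by presburger
    next
      case False
      then obtain x where x: "x \<in> F" "(x,x) \<in> EF\<^sup>+" by blast
      have "inj_dens F EF (V n) (E n) = 0" for n
        using inj_dens_eq[OF finF poset_facts(1)[OF posets[of n]]] cyclic_empty(2)[OF posets[of n] x] by simp
      then show ?thesis by (simp add: convergent_const)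
    qed
  qed
next
  assume "\<forall>(F::nat set) EF. is_digraph F EF \<longrightarrow> convergent (\<lambda>n. inj_dens F EF (V n) (E n))"
  then show "\<forall>(Q::nat set) EQ. is_poset Q EQ \<longrightarrow> convergent (\<lambda>n. inj_dens Q EQ (V n) (E n))"
    unfolding is_poset_def by blast
qed

lemma C14:
  assumes posets: "\<And>n. is_poset (V n) (E n)"
  shows "(\<forall>(Q::nat set) EQ. is_poset Q EQ \<longrightarrow> convergent (\<lambda>n. hom_dens Q EQ (V n) (E n))) \<longleftrightarrow>
         (\<forall>(F::nat set) EF. is_digraph F EF \<longrightarrow> convergent (\<lambda>n. hom_dens F EF (V n) (E n)))"
proof
  assume c3: "\<forall>(Q::nat set) EQ. is_poset Q EQ \<longrightarrow> convergent (\<lambda>n. hom_dens Q EQ (V n) (E n))"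
  show "\<forall>(F::nat set) EF. is_digraph F EF \<longrightarrow> convergent (\<lambda>n. hom_dens F EF (V n) (E n))"
  proof (intro allI impI)
    fix F :: "nat set" and EF assume d: "is_digraph F EF"
    have finF: "finite F" using d unfolding is_digraph_def by simp
    show "convergent (\<lambda>n. hom_dens F EF (V n) (E n))"
    proof (cases "\<forall>x\<in>F. (x,x) \<notin> EF\<^sup>+")
      case True
      have p: "is_poset F (EF\<^sup>+)" by (rule acyclic_poset[OF d True])
      have "hom_dens F EF (V n) (E n) = hom_dens F (EF\<^sup>+) (V n) (E n)" for n
        using hom_dens_eq[OF finF] homS_trancl(1)[OF poset_facts(3)[OF posets[of n]]]
        by metis
      then show ?thesis using c3 p by presburger
    next
      case False
      then obtain x where x: "x \<in> F" "(x,x) \<in> EF\<^sup>+" by blast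
      have "hom_dens F EF (V n) (E n) = 0" for n
        using hom_dens_eq[OF finF, of EF "V n" "E n"] cyclic_empty(1)[OF posets[of n] x] by simp
      then show ?thesis by (simp add: convergent_const)
    qed
  qed
next
  assume "\<forall>(F::nat set) EF. is_digraph F EF \<longrightarrow> convergent (\<lambda>n. hom_dens F EF (V n) (E n))"
  then show "\<forall>(Q::nat set) EQ. is_poset Q EQ \<longrightarrow> convergent (\<lambda>n. hom_dens Q EQ (V n) (E n))"
    unfolding is_poset_def by blast
qed

lemma D56:
  assumes posets: "\<And>n. is_poset (V n) (E n)"
  shows "(\<forall>(F::nat set) EF. is_digraph F EF \<longrightarrow> convergent (\<lambda>n. inj_dens F EF (V n) (E n))) \<longleftrightarrow>
         (\<forall>(F::nat set) EF. is_digraph F EF \<longrightarrow> convergent (\<lambda>n. ind_dens F EF (V n) (E n)))"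
proof
  assume c6: "\<forall>(F::nat set) EF. is_digraph F EF \<longrightarrow> convergent (\<lambda>n. ind_dens F EF (V n) (E n))"
  show "\<forall>(F::nat set) EF. is_digraph F EF \<longrightarrow> convergent (\<lambda>n. inj_dens F EF (V n) (E n))"
  proof (intro allI impI)
    fix F :: "nat set" and EF assume d: "is_digraph F EF"
    have finF: "finite F" and sub: "EF \<subseteq> F \<times> F" using d unfolding is_digraph_def by auto
    have eq: "(\<lambda>n. inj_dens F EF (V n) (E n)) = (\<lambda>n. \<Sum>E'\<in>Sup_rel F EF. ind_dens F E' (V n) (E n))"
      by (rule ext) (rule inj_ind_dens[OF finF poset_facts(1)[OF posets] sub])
    show "convergent (\<lambda>n. inj_dens F EF (V n) (E n))" unfolding eq
    proof (rule convergent_sum)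
      fix E' assume "E' \<in> Sup_rel F EF"
      then have "is_digraph F E'" using d unfolding Sup_rel_def is_digraph_def by auto
      then show "convergent (\<lambda>n. ind_dens F E' (V n) (E n))" using c6 by blast
    qed
  qed
next
  assume c5: "\<forall>(F::nat set) EF. is_digraph F EF \<longrightarrow> convergent (\<lambda>n. inj_dens F EF (V n) (E n))"
  have main: "\<forall>EF. is_digraph F EF \<longrightarrow> card (F \<times> F - EF) = m \<longrightarrow> convergent (\<lambda>n. ind_dens F EF (V n) (E n))"
    for m and F :: "nat set"
  proof (induction m rule: less_induct)
    case (less m)
    show ?case
    proof (intro allI impI)
      fix EF assume d: "is_digraph F EF" and m: "card (F \<times> F - EF) = m"
      have finF: "finite F" and sub: "EF \<subseteq> F \<times> F" using d unfolding is_digraph_def by auto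
      have fS: "finite (Sup_rel F EF)" by (rule Sup_rel_fin[OF finF])
      have inS: "EF \<in> Sup_rel F EF" by (rule EF_in_Sup[OF sub])
      have eq: "inj_dens F EF (V n) (E n) = ind_dens F EF (V n) (E n) + (\<Sum>E'\<in>Sup_rel F EF - {EF}. ind_dens F E' (V n) (E n))" for n
        using inj_ind_dens[OF finF poset_facts(1)[OF posets[of n]] sub] sum.remove[OF fS inS] by simp
      have eq2: "(\<lambda>n. ind_dens F EF (V n) (E n)) = (\<lambda>n. inj_dens F EF (V n) (E n) - (\<Sum>E'\<in>Sup_rel F EF - {EF}. ind_dens F E' (V n) (E n)))"
        using eq by (simp add: fun_eq_iff)
      have "convergent (\<lambda>n. \<Sum>E'\<in>Sup_rel F EF - {EF}. ind_dens F E' (V n) (E n))"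
      proof (rule convergent_sum)
        fix E' assume e: "E' \<in> Sup_rel F EF - {EF}"
        then have dE: "is_digraph F E'" using d unfolding Sup_rel_def is_digraph_def by auto
        have ps: "F \<times> F - E' \<subset> F \<times> F - EF" using e unfolding Sup_rel_def by auto
        have ff: "finite (F \<times> F - EF)" using finF by simp
        have "card (F \<times> F - E') < m" unfolding m[symmetric] by (rule psubset_card_mono[OF ff ps])
        then show "convergent (\<lambda>n. ind_dens F E' (V n) (E n))" using less.IH dE by blast
      qed
      moreover have "convergent (\<lambda>n. inj_dens F EF (V n) (E n))" using c5 d by blast
      ultimately show "convergent (\<lambda>n. ind_dens F EF (V n) (E n))"
        unfolding eq2 by (intro convergent_diff)
    qed
  qed
  show "\<forall>(F::nat set) EF. is_digraph F EF \<longrightarrow> convergent (\<lambda>n. ind_dens F EF (V n) (E n))"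
    using main by blast
qed



lemma E45_key:
  assumes posets: "\<And>n. is_poset (V n) (E n)" and cc: "card_converges (\<lambda>n. card (V n))"
  shows "(\<forall>(F::nat set) EF. is_digraph F EF \<longrightarrow> convergent (\<lambda>n. hom_dens F EF (V n) (E n))) \<longleftrightarrow>
         (\<forall>(F::nat set) EF. is_digraph F EF \<longrightarrow> convergent (\<lambda>n. inj_dens F EF (V n) (E n)))"
proof -
  have fin: "\<And>n. finite (V n)" using poset_facts(1)[OF posets] .
  have pos: "\<And>n. card (V n) > 0" using poset_facts(4)[OF posets] .
  show ?thesis
  proof (cases "filterlim (\<lambda>n. card (V n)) at_top sequentially")
    case True
    show ?thesis
    proof (intro iffI allI impI)
      fix F :: "nat set" and EF assume h: "\<forall>(F::nat set) EF. is_digraph F EF \<longrightarrow> convergent (\<lambda>n. hom_dens F EF (V n) (E n))"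
        and d: "is_digraph F EF"
      have finF: "finite F" using d unfolding is_digraph_def by simp
      show "convergent (\<lambda>n. inj_dens F EF (V n) (E n))" using inf_case_equiv[OF fin True finF] h d by blast
    next
      fix F :: "nat set" and EF assume h: "\<forall>(F::nat set) EF. is_digraph F EF \<longrightarrow> convergent (\<lambda>n. inj_dens F EF (V n) (E n))"
        and d: "is_digraph F EF"
      have finF: "finite F" using d unfolding is_digraph_def by simp
      show "convergent (\<lambda>n. hom_dens F EF (V n) (E n))" using inf_case_equiv[OF fin True finF] h d by blast
    qed
  next
    case False
    then obtain L where ev: "eventually (\<lambda>n. card (V n) = L) sequentially" using cc unfolding card_converges_def by blast
    have L: "L > 0"
    proof -
      obtain M where "\<forall>n\<ge>M. card (V n) = L" using ev unfolding eventually_sequentially by blast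
      then have "card (V M) = L" by simp
      then show ?thesis using pos[of M] by simp
    qed
    let ?H = "\<lambda>(F::nat set) EF. \<exists>v. eventually (\<lambda>n. card (homS F EF (V n) (E n)) = v) sequentially"
    let ?I = "\<lambda>(F::nat set) EF. \<exists>v. eventually (\<lambda>n. card (injS F EF (V n) (E n)) = v) sequentially"
    have hc: "convergent (\<lambda>n. hom_dens F EF (V n) (E n)) \<longleftrightarrow> ?H F EF" if "is_digraph F EF" for F :: "nat set" and EF
      using const_hom[OF fin ev L] that unfolding is_digraph_def by blast
    have ic: "convergent (\<lambda>n. inj_dens F EF (V n) (E n)) \<longleftrightarrow> ?I F EF" if "is_digraph F EF" for F :: "nat set" and EF
      using const_inj[OF fin ev] that unfolding is_digraph_def by blast
    show ?thesis
    proof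
      assume h: "\<forall>(F::nat set) EF. is_digraph F EF \<longrightarrow> convergent (\<lambda>n. hom_dens F EF (V n) (E n))"
      have main: "\<forall>(F::nat set) EF. card F = m \<longrightarrow> is_digraph F EF \<longrightarrow> ?I F EF" for m
      proof (induction m rule: less_induct)
        case (less m)
        show ?case
        proof (intro allI impI)
          fix F :: "nat set" and EF assume m: "card F = m" and d: "is_digraph F EF"
          have finF: "finite F" and sub: "EF \<subseteq> F \<times> F" using d unfolding is_digraph_def by auto
          have fR: "finite (Retr F)" by (rule Retr_fin[OF finF])
          have rest: "\<exists>v. eventually (\<lambda>n. (\<Sum>r\<in>Retr F - {idr F}. card (injS (r ` F) (qE r EF) (V n) (E n))) = v) sequentially"
          proof (rule evsum)
            show "finite (Retr F - {idr F})" using fR by simp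
            show "\<forall>r\<in>Retr F - {idr F}. \<exists>v. eventually (\<lambda>n. card (injS (r ` F) (qE r EF) (V n) (E n)) = v) sequentially"
            proof
              fix r assume r: "r \<in> Retr F - {idr F}"
              have "card (r ` F) < m" using Retr_smaller[OF finF] r m by blast
              moreover have "is_digraph (r ` F) (qE r EF)" using Retr_digraph[OF d] r by blast
              ultimately show "\<exists>v. eventually (\<lambda>n. card (injS (r ` F) (qE r EF) (V n) (E n)) = v) sequentially"
                using less.IH by blast
            qed
          qed
          then obtain w where w: "eventually (\<lambda>n. (\<Sum>r\<in>Retr F - {idr F}. card (injS (r ` F) (qE r EF) (V n) (E n))) = w) sequentially" by blast
          obtain u where u: "eventually (\<lambda>n. card (homS F EF (V n) (E n)) = u) sequentially"
            using hc[OF d] h d by blast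
          have dec: "card (homS F EF (V n) (E n)) = card (injS F EF (V n) (E n)) + (\<Sum>r\<in>Retr F - {idr F}. card (injS (r ` F) (qE r EF) (V n) (E n)))" for n
            using hom_decomp[OF finF fin[of n] sub, of "E n"] sum.remove[OF fR idr_Retr, of "\<lambda>r. card (injS (r ` F) (qE r EF) (V n) (E n))"]
            by (simp add: idr_img idr_q[OF sub])
          have "eventually (\<lambda>n. card (injS F EF (V n) (E n)) = u - w) sequentially"
            using u w by (rule eventually_elim2) (use dec in \<open>auto\<close>)
          then show "?I F EF" by blast
        qed
      qed
      show "\<forall>(F::nat set) EF. is_digraph F EF \<longrightarrow> convergent (\<lambda>n. inj_dens F EF (V n) (E n))"
        using main ic by blast
    next
      assume h: "\<forall>(F::nat set) EF. is_digraph F EF \<longrightarrow> convergent (\<lambda>n. inj_dens F EF (V n) (E n))"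
      show "\<forall>(F::nat set) EF. is_digraph F EF \<longrightarrow> convergent (\<lambda>n. hom_dens F EF (V n) (E n))"
      proof (intro allI impI)
        fix F :: "nat set" and EF assume d: "is_digraph F EF"
        have finF: "finite F" and sub: "EF \<subseteq> F \<times> F" using d unfolding is_digraph_def by auto
        have fR: "finite (Retr F)" by (rule Retr_fin[OF finF])
        have "\<exists>v. eventually (\<lambda>n. (\<Sum>r\<in>Retr F. card (injS (r ` F) (qE r EF) (V n) (E n))) = v) sequentially"
        proof (rule evsum[OF fR])
          show "\<forall>r\<in>Retr F. \<exists>v. eventually (\<lambda>n. card (injS (r ` F) (qE r EF) (V n) (E n)) = v) sequentially"
          proof
            fix r assume r: "r \<in> Retr F"
            have "is_digraph (r ` F) (qE r EF)" using Retr_digraph[OF d r] .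
            then show "\<exists>v. eventually (\<lambda>n. card (injS (r ` F) (qE r EF) (V n) (E n)) = v) sequentially"
              using ic h by blast
          qed
        qed
        moreover have "card (homS F EF (V n) (E n)) = (\<Sum>r\<in>Retr F. card (injS (r ` F) (qE r EF) (V n) (E n)))" for n
          by (rule hom_decomp[OF finF fin[of n] sub])
        ultimately have "?H F EF" by simp
        then show "convergent (\<lambda>n. hom_dens F EF (V n) (E n))" using hc[OF d] by blast
      qed
    qed
  qed
qed

lemma E45:
  assumes posets: "\<And>n. is_poset (V n) (E n)"
  shows "((\<forall>(F::nat set) EF. is_digraph F EF \<longrightarrow> convergent (\<lambda>n. hom_dens F EF (V n) (E n)))
            \<and> card_converges (\<lambda>n. card (V n))) \<longleftrightarrow>
         (\<forall>(F::nat set) EF. is_digraph F EF \<longrightarrow> convergent (\<lambda>n. inj_dens F EF (V n) (E n)))"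
proof
  assume "(\<forall>(F::nat set) EF. is_digraph F EF \<longrightarrow> convergent (\<lambda>n. hom_dens F EF (V n) (E n)))
            \<and> card_converges (\<lambda>n. card (V n))"
  then show "\<forall>(F::nat set) EF. is_digraph F EF \<longrightarrow> convergent (\<lambda>n. inj_dens F EF (V n) (E n))"
    using E45_key[where V=V and E=E, OF posets] by blast
next
  assume h: "\<forall>(F::nat set) EF. is_digraph F EF \<longrightarrow> convergent (\<lambda>n. inj_dens F EF (V n) (E n))"
  have cc: "card_converges (\<lambda>n. card (V n))"
  proof (rule card_conv_from_antichain)
    show "\<And>n. finite (V n)" using poset_facts(1)[OF posets] .
    fix k :: nat assume "k \<ge> 1"
    then have "is_digraph {0..<k} {}" unfolding is_digraph_def by auto
    then show "convergent (\<lambda>n. inj_dens {0..<k} {} (V n) (E n))" using h by blast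
  qed
  then show "(\<forall>(F::nat set) EF. is_digraph F EF \<longrightarrow> convergent (\<lambda>n. hom_dens F EF (V n) (E n)))
            \<and> card_converges (\<lambda>n. card (V n))"
    using E45_key[where V=V and E=E, OF posets cc] h by blast
qed

lemma C1_2:
  assumes posets: "\<And>n. is_poset (V n) (E n)"
    and "(\<forall>(Q::nat set) EQ. is_poset Q EQ \<longrightarrow> convergent (\<lambda>n. inj_dens Q EQ (V n) (E n)))"
  shows "card_converges (\<lambda>n. card (V n))"
proof (rule card_conv_from_antichain)
  show "\<And>n. finite (V n)" using poset_facts(1)[OF posets] .
  fix k :: nat assume "k \<ge> 1"
  then have "is_poset {0..<k} {}" unfolding is_poset_def is_digraph_def by auto
  then show "convergent (\<lambda>n. inj_dens {0..<k} {} (V n) (E n))" using assms(2) by blast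
qed

theorem theorem3p1:
  fixes V :: "nat \<Rightarrow> 'a set" and E :: "nat \<Rightarrow> ('a \<times> 'a) set"
  assumes posets: "\<And>n. is_poset (V n) (E n)"
  defines "c1 \<equiv> (\<forall>(Q::nat set) EQ. is_poset Q EQ \<longrightarrow>
                    convergent (\<lambda>n. hom_dens Q EQ (V n) (E n)))
                 \<and> card_converges (\<lambda>n. card (V n))"
      and "c2 \<equiv> (\<forall>(Q::nat set) EQ. is_poset Q EQ \<longrightarrow>
                    convergent (\<lambda>n. inj_dens Q EQ (V n) (E n)))"
      and "c3 \<equiv> (\<forall>(Q::nat set) EQ. is_poset Q EQ \<longrightarrow>
                    convergent (\<lambda>n. ind_dens Q EQ (V n) (E n)))"
      and "c4 \<equiv> (\<forall>(F::nat set) EF. is_digraph F EF \<longrightarrow>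
                    convergent (\<lambda>n. hom_dens F EF (V n) (E n)))
                 \<and> card_converges (\<lambda>n. card (V n))"
      and "c5 \<equiv> (\<forall>(F::nat set) EF. is_digraph F EF \<longrightarrow>
                    convergent (\<lambda>n. inj_dens F EF (V n) (E n)))"
      and "c6 \<equiv> (\<forall>(F::nat set) EF. is_digraph F EF \<longrightarrow>
                    convergent (\<lambda>n. ind_dens F EF (V n) (E n)))"
  shows "(c1 \<longleftrightarrow> c2) \<and> (c1 \<longleftrightarrow> c3) \<and> (c1 \<longleftrightarrow> c4) \<and> (c1 \<longleftrightarrow> c5) \<and> (c1 \<longleftrightarrow> c6)"
proof -
  have a: "c3 \<longleftrightarrow> c6" unfolding c3_def c6_def by (rule A36[where V=V and E=E, OF posets])
  have b: "c2 \<longleftrightarrow> c5" unfolding c2_def c5_def by (rule B25[where V=V and E=E, OF posets])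
  have c: "c1 \<longleftrightarrow> c4" unfolding c1_def c4_def using C14[where V=V and E=E, OF posets] by blast
  have d: "c5 \<longleftrightarrow> c6" unfolding c5_def c6_def by (rule D56[where V=V and E=E, OF posets])
  have e: "c4 \<longleftrightarrow> c5" unfolding c4_def c5_def by (rule E45[where V=V and E=E, OF posets])
  show ?thesis using a b c d e by blast
qed

end
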